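(* Let $\mathcal X,\mathcal W$ be measurable spaces, $\mathcal Z=\mathcal X\times\mathcal W$, and let $(X,W,Y)$ have a joint distribution on $\mathcal X\times\mathcal W\times\mathbb R$ with $\mathbb E[Y^2]<\infty$; write $Z=(X,W)$. Let $n,m\ge 1$ be integers, $N=n+m$, and $\lambda\ge 0$. Let $\mathcal F\subset L^2(P_X)$ and $\mathcal G\subset L^2(P_Z)$ be nonempty closed convex sets, where each $f:\mathcal X\to\mathbb R$ is identified with its lift $(x,w)\mapsto f(x)$ on $\mathcal Z$. Define the population loss $$\mathcal{L}(f,g;\lambda)=\frac{n}{N}\mathbb{E}[(Y-f(X))^2]+\frac{m}{N}\mathbb{E}[(g(Z)-f(X))^2]+\lambda\frac{n}{N}\mathbb{E}[(Y-g(Z))^2],$$ and let $\mu(x)=\mathbb E[Y\mid X=x]$ and $\eta(z)=\mathbb E[Y\mid Z=z]$. Then any $(f^\star,g^\star)\in\mathcal F\times\mathcal G$ minimizing $\mathcal L(\cdot,\cdot;\lambda)$ over $\mathcal F\times\mathcal G$ satisfies $$f^\star=\Pi_{\mathcal{F}}\left(\frac{n}{N} \mu+\frac{m}{N}\mathbb{E}[g^\star(Z)\mid X=\cdot\,]\right),\qquad g^\star=\Pi_{\mathcal{G}}\left(\frac{m}{m+n\lambda} f^\star+\frac{n\lambda}{m+n\lambda}\eta\right).$$ Furthermore, if $\mu\in\mathcal F$, $\mu\in\mathcal G$ (via its lift) and $\eta\in\mathcal G$, then $$f^\star=\mu\quad\text{and}\quad g^\star=\frac{m}{m+n\lambda}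\mu+\frac{n\lambda}{m+n\lambda}\eta.$$
   Context: $\Pi_{\mathcal F}$ denotes the metric projection onto $\mathcal F$ in $L^2(P_X)$ (i.e. $\Pi_{\mathcal F}h\in\arg\min_{c\in\mathcal F}\mathbb E[(h(X)-c(X))^2]$), and $\Pi_{\mathcal G}$ the metric projection onto $\mathcal G$ in $L^2(P_Z)$. Here $P_X$, $P_Z$ are the marginal laws of $X$ and $Z$. *)

theory Defs
  imports "HOL-Probability.Probability"
begin

definition L2fun :: "'a measure \<Rightarrow> ('a \<Rightarrow> real) \<Rightarrow> bool" where
  "L2fun P f \<longleftrightarrow> f \<in> borel_measurable P \<and> integrable P (\<lambda>x. (f x)\<^sup>2)"

definition L2convex :: "'a measure \<Rightarrow> ('a \<Rightarrow> real) set \<Rightarrow> bool" where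
  "L2convex P S \<longleftrightarrow> (\<forall>f\<in>S. \<forall>g\<in>S. \<forall>t::real. 0 \<le> t \<and> t \<le> 1 \<longrightarrow>
      (\<lambda>x. t * f x + (1 - t) * g x) \<in> S)"

text \<open>Closedness in L2(P): every L2-limit of a sequence in S lies in S
  (in particular S is closed under P-a.e. modification).\<close>
definition L2closed :: "'a measure \<Rightarrow> ('a \<Rightarrow> real) set \<Rightarrow> bool" where
  "L2closed P S \<longleftrightarrow> (\<forall>fs f. (\<forall>k. fs k \<in> S) \<and> L2fun P f \<and>
      (\<lambda>k. \<integral>x. (fs k x - f x)\<^sup>2 \<partial>P) \<longlonglongrightarrow> 0 \<longrightarrow> f \<in> S)"

definition L2ccset :: "'a measure \<Rightarrow> ('a \<Rightarrow> real) set \<Rightarrow> bool" where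
  "L2ccset P S \<longleftrightarrow> S \<noteq> {} \<and> (\<forall>f\<in>S. L2fun P f) \<and> L2convex P S \<and> L2closed P S"

text \<open>h is a version of the conditional expectation x \<mapsto> E[V | T = x], where T is a
  random element with values in N: h is N-measurable and
  E[1_A(T) V] = E[1_A(T) h(T)] for all A in N.\<close>
definition cond_exp_version ::
  "'m measure \<Rightarrow> 'a measure \<Rightarrow> ('m \<Rightarrow> 'a) \<Rightarrow> ('m \<Rightarrow> real) \<Rightarrow> ('a \<Rightarrow> real) \<Rightarrow> bool" where
  "cond_exp_version M N T V h \<longleftrightarrow> h \<in> borel_measurable N \<and>
     (\<forall>A\<in>sets N. integrable M (\<lambda>\<omega>. indicator A (T \<omega>) * h (T \<omega>)) \<and>
        (\<integral>\<omega>. indicator A (T \<omega>) * V \<omega> \<partial>M) = (\<integral>\<omega>. indicator A (T \<omega>) * h (T \<omega>) \<partial>M))"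

definition is_proj ::
  "'m measure \<Rightarrow> ('m \<Rightarrow> 'a) \<Rightarrow> ('a \<Rightarrow> real) set \<Rightarrow> ('a \<Rightarrow> real) \<Rightarrow> ('a \<Rightarrow> real) \<Rightarrow> bool" where
  "is_proj M T S h c \<longleftrightarrow> c \<in> S \<and>
     (\<forall>c'\<in>S. (\<integral>\<omega>. (h (T \<omega>) - c (T \<omega>))\<^sup>2 \<partial>M) \<le> (\<integral>\<omega>. (h (T \<omega>) - c' (T \<omega>))\<^sup>2 \<partial>M))"

definition popLoss ::
  "'m measure \<Rightarrow> ('m \<Rightarrow> 'x) \<Rightarrow> ('m \<Rightarrow> 'w) \<Rightarrow> ('m \<Rightarrow> real) \<Rightarrow> nat \<Rightarrow> nat \<Rightarrow> real
    \<Rightarrow> ('x \<Rightarrow> real) \<Rightarrow> ('x \<times> 'w \<Rightarrow> real) \<Rightarrow> real" where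
  "popLoss M X W Y n m lam f g =
     real n / real (n + m) * (\<integral>\<omega>. (Y \<omega> - f (X \<omega>))\<^sup>2 \<partial>M)
   + real m / real (n + m) * (\<integral>\<omega>. (g (X \<omega>, W \<omega>) - f (X \<omega>))\<^sup>2 \<partial>M)
   + lam * (real n / real (n + m)) * (\<integral>\<omega>. (Y \<omega> - g (X \<omega>, W \<omega>))\<^sup>2 \<partial>M)"

end

theory Submission
  imports Defs
begin


lemma L2_mult:
  assumes "L2fun M u" "L2fun M v"
  shows "integrable M (\<lambda>x. u x * v x)"
proof (rule Bochner_Integration.integrable_bound)
  show "integrable M (\<lambda>x. (u x)\<^sup>2 + (v x)\<^sup>2)" using assms unfolding L2fun_def by auto
  show "(\<lambda>x. u x * v x) \<in> borel_measurable M" using assms unfolding L2fun_def by auto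
  show "AE x in M. norm (u x * v x) \<le> norm ((u x)\<^sup>2 + (v x)\<^sup>2)"
  proof (rule AE_I2)
    fix x
    have h0: "0 \<le> (\<bar>u x\<bar> - \<bar>v x\<bar>)\<^sup>2" by simp
    have h1: "(\<bar>u x\<bar> - \<bar>v x\<bar>)\<^sup>2 = (u x)\<^sup>2 + (v x)\<^sup>2 - 2 * \<bar>u x * v x\<bar>"
      by (simp add: power2_diff abs_mult)
    have "\<bar>u x * v x\<bar> \<le> (u x)\<^sup>2 + (v x)\<^sup>2" using h0 h1 abs_ge_zero[of "u x * v x"] by linarith
    then show "norm (u x * v x) \<le> norm ((u x)\<^sup>2 + (v x)\<^sup>2)" by simp
  qed
qed

lemma L2_add:
  assumes "L2fun M u" "L2fun M v"
  shows "L2fun M (\<lambda>x. u x + v x)"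
proof -
  have "integrable M (\<lambda>x. (u x)\<^sup>2 + 2 * (u x * v x) + (v x)\<^sup>2)"
    using assms L2_mult[OF assms] unfolding L2fun_def by auto
  moreover have "(\<lambda>x. (u x + v x)\<^sup>2) = (\<lambda>x. (u x)\<^sup>2 + 2 * (u x * v x) + (v x)\<^sup>2)"
    by (simp add: power2_sum algebra_simps)
  moreover have "(\<lambda>x. u x + v x) \<in> borel_measurable M" using assms unfolding L2fun_def by auto
  ultimately show ?thesis unfolding L2fun_def by simp
qed

lemma L2_cmult:
  assumes "L2fun M u"
  shows "L2fun M (\<lambda>x. c * u x)"
proof -
  have "integrable M (\<lambda>x. c\<^sup>2 * (u x)\<^sup>2)" using assms unfolding L2fun_def by auto
  moreover have "(\<lambda>x. c * u x) \<in> borel_measurable M" using assms unfolding L2fun_def by auto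
  ultimately show ?thesis unfolding L2fun_def by (simp add: power_mult_distrib)
qed

lemma L2_diff:
  assumes "L2fun M u" "L2fun M v"
  shows "L2fun M (\<lambda>x. u x - v x)"
  using L2_add[OF assms(1) L2_cmult[OF assms(2), of "-1"]] by simp

lemma L2_const:
  assumes "finite_measure M"
  shows "L2fun M (\<lambda>x. c)"
  using assms unfolding L2fun_def by (simp add: finite_measure.integrable_const)

lemma L2_distr:
  assumes "T \<in> measurable M N" "L2fun (distr M N T) f"
  shows "L2fun M (\<lambda>x. f (T x))"
  using assms unfolding L2fun_def
  by (auto simp: integrable_distr_eq)

lemma CE:
  assumes P: "prob_space M" and T: "T \<in> measurable M N" and Ym: "Y \<in> borel_measurable M"
    and Y2: "integrable M (\<lambda>\<omega>. (Y \<omega>)\<^sup>2)" and ce: "cond_exp_version M N T Y h"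
  shows "L2fun M (\<lambda>\<omega>. h (T \<omega>))"
    and "\<And>\<phi>. \<phi> \<in> borel_measurable N \<Longrightarrow> integrable M (\<lambda>\<omega>. (\<phi> (T \<omega>))\<^sup>2) \<Longrightarrow>
          (\<integral>\<omega>. \<phi> (T \<omega>) * (Y \<omega> - h (T \<omega>)) \<partial>M) = 0"
proof -
  interpret prob_space M by (rule P)
  define F where "F = vimage_algebra (space M) T N"
  have sub: "subalgebra M F" unfolding subalgebra_def F_def
    using sets_image_in_sets[OF refl T] by simp
  interpret finite_measure_subalgebra M F by unfold_locales (rule sub)
  have hm: "h \<in> borel_measurable N" using ce unfolding cond_exp_version_def by auto
  have Tsp: "T \<in> space M \<rightarrow> space N" using measurable_space[OF T] by auto
  have TF: "T \<in> measurable F N" unfolding F_def by (rule measurable_vimage_algebra1[OF Tsp])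
  have hTF: "(\<lambda>\<omega>. h (T \<omega>)) \<in> borel_measurable F" using measurable_compose[OF TF hm] .
  have hTM: "(\<lambda>\<omega>. h (T \<omega>)) \<in> borel_measurable M" using measurable_compose[OF T hm] .
  have intY: "integrable M Y" by (rule square_integrable_imp_integrable[OF Ym Y2])
  have ceA: "\<And>A. A \<in> sets N \<Longrightarrow> integrable M (\<lambda>\<omega>. indicator A (T \<omega>) * h (T \<omega>)) \<and>
        (\<integral>\<omega>. indicator A (T \<omega>) * Y \<omega> \<partial>M) = (\<integral>\<omega>. indicator A (T \<omega>) * h (T \<omega>) \<partial>M)"
    using ce unfolding cond_exp_version_def by auto
  have inth: "integrable M (\<lambda>\<omega>. h (T \<omega>))"
  proof -
    have "integrable M (\<lambda>\<omega>. indicator (space N) (T \<omega>) * h (T \<omega>))" using ceA[of "space N"] by auto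
    moreover have "integrable M (\<lambda>\<omega>. indicator (space N) (T \<omega>) * h (T \<omega>)) = integrable M (\<lambda>\<omega>. h (T \<omega>))"
      by (rule Bochner_Integration.integrable_cong[OF refl]) (use Tsp in \<open>auto simp: indicator_def\<close>)
    ultimately show ?thesis by simp
  qed
  have AEc: "AE \<omega> in M. real_cond_exp M F Y \<omega> = h (T \<omega>)"
  proof (rule real_cond_exp_charact)
    fix A assume "A \<in> sets F"
    then obtain B where B: "B \<in> sets N" "A = T -` B \<inter> space M"
      unfolding F_def sets_vimage_algebra2[OF Tsp] by auto
    have e1: "\<And>g::'a \<Rightarrow> real. (\<integral>x\<in>A. g x \<partial>M) = (\<integral>x. indicator B (T x) * g x \<partial>M)"
      unfolding set_lebesgue_integral_def B(2)
      by (rule Bochner_Integration.integral_cong) (auto simp: indicator_def)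
    show "(\<integral>x\<in>A. Y x \<partial>M) = (\<integral>x\<in>A. h (T x) \<partial>M)"
      unfolding e1 using ceA[OF B(1)] by simp
  qed (auto simp: intY inth hTF)
  have cvx: "convex_on UNIV (\<lambda>x::real. x\<^sup>2)" using convex_power2 by simp
  have "integrable M (\<lambda>x. (real_cond_exp M F Y x)\<^sup>2)"
    by (rule integrable_convex_cond_exp[where I=UNIV and q="\<lambda>x. x\<^sup>2" and a=0 and b=0]) (simp_all add: intY Y2 cvx)
  then have "integrable M (\<lambda>x. (h (T x))\<^sup>2)"
  proof (rule integrable_cong_AE_imp)
    show "(\<lambda>x. (h (T x))\<^sup>2) \<in> borel_measurable M" using hTM by simp
    show "AE x in M. (real_cond_exp M F Y x)\<^sup>2 = (h (T x))\<^sup>2" using AEc by eventually_elim simp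
  qed
  then show L2h: "L2fun M (\<lambda>\<omega>. h (T \<omega>))" unfolding L2fun_def using hTM by simp
  fix \<phi> :: "_ \<Rightarrow> real" assume pm: "\<phi> \<in> borel_measurable N" and p2: "integrable M (\<lambda>\<omega>. (\<phi> (T \<omega>))\<^sup>2)"
  have pF: "(\<lambda>\<omega>. \<phi> (T \<omega>)) \<in> borel_measurable F" using measurable_compose[OF TF pm] .
  have L2p: "L2fun M (\<lambda>\<omega>. \<phi> (T \<omega>))" unfolding L2fun_def using p2 measurable_compose[OF T pm] by simp
  have L2Y: "L2fun M Y" unfolding L2fun_def using Ym Y2 by simp
  have i1: "integrable M (\<lambda>\<omega>. \<phi> (T \<omega>) * Y \<omega>)" by (rule L2_mult[OF L2p L2Y])
  have i2: "integrable M (\<lambda>\<omega>. \<phi> (T \<omega>) * h (T \<omega>))" by (rule L2_mult[OF L2p L2h])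
  have "(\<integral>\<omega>. \<phi> (T \<omega>) * real_cond_exp M F Y \<omega> \<partial>M) = (\<integral>\<omega>. \<phi> (T \<omega>) * Y \<omega> \<partial>M)"
    by (rule real_cond_exp_intg(2)[OF i1 pF Ym])
  moreover have "(\<integral>\<omega>. \<phi> (T \<omega>) * real_cond_exp M F Y \<omega> \<partial>M) = (\<integral>\<omega>. \<phi> (T \<omega>) * h (T \<omega>) \<partial>M)"
  proof (rule integral_cong_AE)
    have "(\<lambda>\<omega>. \<phi> (T \<omega>)) \<in> borel_measurable M" using measurable_from_subalg[OF sub pF] .
    then show "(\<lambda>\<omega>. \<phi> (T \<omega>) * real_cond_exp M F Y \<omega>) \<in> borel_measurable M" by simp
    show "(\<lambda>\<omega>. \<phi> (T \<omega>) * h (T \<omega>)) \<in> borel_measurable M" using measurable_from_subalg[OF sub pF] hTM by simp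
    show "AE x in M. \<phi> (T x) * real_cond_exp M F Y x = \<phi> (T x) * h (T x)" using AEc by eventually_elim simp
  qed
  ultimately show "(\<integral>\<omega>. \<phi> (T \<omega>) * (Y \<omega> - h (T \<omega>)) \<partial>M) = 0"
    using i1 i2 by (simp add: right_diff_distrib)
qed



lemma ident2:
  fixes a b :: real and M :: "'a measure"
  assumes ab: "a + b = 1" and L: "L2fun M y" "L2fun M G" "L2fun M mu" "L2fun M k" "L2fun M f"
    and o1: "(\<integral>x. f x * (y x - mu x) \<partial>M) = 0" and o2: "(\<integral>x. f x * (G x - k x) \<partial>M) = 0"
  shows "a * (\<integral>x. (y x - f x)\<^sup>2 \<partial>M) + b * (\<integral>x. (G x - f x)\<^sup>2 \<partial>M) =
    (\<integral>x. (a * mu x + b * k x - f x)\<^sup>2 \<partial>M) + (\<integral>x. a * (y x)\<^sup>2 + b * (G x)\<^sup>2 - (a * mu x + b * k x)\<^sup>2 \<partial>M)"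
proof -
  have pw: "\<And>x. a * (y x - f x)\<^sup>2 + b * (G x - f x)\<^sup>2 =
     ((a * mu x + b * k x - f x)\<^sup>2 + (a * (y x)\<^sup>2 + b * (G x)\<^sup>2 - (a * mu x + b * k x)\<^sup>2))
     - 2 * a * (f x * (y x - mu x)) - 2 * b * (f x * (G x - k x))"
  proof -
    fix x
    show "?thesis x" using ab by algebra
  qed
  have sq: "\<And>u. L2fun M u \<Longrightarrow> integrable M (\<lambda>x. (u x)\<^sup>2)" unfolding L2fun_def by simp
  have i1: "integrable M (\<lambda>x. (y x - f x)\<^sup>2)" by (rule sq[OF L2_diff[OF L(1) L(5)]])
  have i2: "integrable M (\<lambda>x. (G x - f x)\<^sup>2)" by (rule sq[OF L2_diff[OF L(2) L(5)]])
  have i3: "integrable M (\<lambda>x. (a * mu x + b * k x - f x)\<^sup>2)"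
    by (rule sq[OF L2_diff[OF L2_add[OF L2_cmult[OF L(3)] L2_cmult[OF L(4)]] L(5)]])
  have i4': "integrable M (\<lambda>x. (a * mu x + b * k x)\<^sup>2)"
    by (rule sq[OF L2_add[OF L2_cmult[OF L(3)] L2_cmult[OF L(4)]]])
  have i4: "integrable M (\<lambda>x. a * (y x)\<^sup>2 + b * (G x)\<^sup>2 - (a * mu x + b * k x)\<^sup>2)"
    using sq[OF L(1)] sq[OF L(2)] i4' by auto
  have i5: "integrable M (\<lambda>x. f x * (y x - mu x))" by (rule L2_mult[OF L(5) L2_diff[OF L(1) L(3)]])
  have i6: "integrable M (\<lambda>x. f x * (G x - k x))" by (rule L2_mult[OF L(5) L2_diff[OF L(2) L(4)]])
  have "a * (\<integral>x. (y x - f x)\<^sup>2 \<partial>M) + b * (\<integral>x. (G x - f x)\<^sup>2 \<partial>M) =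
        (\<integral>x. a * (y x - f x)\<^sup>2 + b * (G x - f x)\<^sup>2 \<partial>M)"
    using i1 i2 by simp
  also have "\<dots> = (\<integral>x. ((a * mu x + b * k x - f x)\<^sup>2 + (a * (y x)\<^sup>2 + b * (G x)\<^sup>2 - (a * mu x + b * k x)\<^sup>2))
     - 2 * a * (f x * (y x - mu x)) - 2 * b * (f x * (G x - k x)) \<partial>M)"
    unfolding pw ..
  also have "\<dots> = (\<integral>x. (a * mu x + b * k x - f x)\<^sup>2 \<partial>M) + (\<integral>x. a * (y x)\<^sup>2 + b * (G x)\<^sup>2 - (a * mu x + b * k x)\<^sup>2 \<partial>M)
     - 2 * a * (\<integral>x. f x * (y x - mu x) \<partial>M) - 2 * b * (\<integral>x. f x * (G x - k x) \<partial>M)"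
    using i3 i4 i5 i6 by simp
  finally show ?thesis using o1 o2 by simp
qed

lemma pw3: "p + q = 1 \<Longrightarrow> b * q = lam * a * p \<Longrightarrow> t = p * mu + q * eta \<Longrightarrow>
  a * (Y - f)\<^sup>2 + b * (g - f)\<^sup>2 + lam * a * (Y - g)\<^sup>2 =
     a * (Y - mu)\<^sup>2 + b * (t - mu)\<^sup>2 + lam * a * (Y - t)\<^sup>2
     + a * (f - mu)\<^sup>2 + b * ((g - t) - (f - mu))\<^sup>2 + lam * a * (g - t)\<^sup>2
     - 2 * (a + b * q) * ((f - mu) * (Y - mu)) + 2 * (b * q) * ((f - mu) * (Y - eta))
     - 2 * (lam * a) * ((g - t) * (Y - eta))" for a b p q lam Y f g mu eta t :: real
  by algebra

lemma ident3:
  fixes a b p q lam :: real and M :: "'a measure"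
  assumes pq: "p + q = 1" and bq: "b * q = lam * a * p"
    and L: "L2fun M Y" "L2fun M mu" "L2fun M eta" "L2fun M f" "L2fun M g"
    and o1: "(\<integral>x. (f x - mu x) * (Y x - mu x) \<partial>M) = 0"
    and o2: "(\<integral>x. (f x - mu x) * (Y x - eta x) \<partial>M) = 0"
    and o3: "(\<integral>x. (g x - (p * mu x + q * eta x)) * (Y x - eta x) \<partial>M) = 0"
  shows "a * (\<integral>x. (Y x - f x)\<^sup>2 \<partial>M) + b * (\<integral>x. (g x - f x)\<^sup>2 \<partial>M) + lam * a * (\<integral>x. (Y x - g x)\<^sup>2 \<partial>M)
    = a * (\<integral>x. (Y x - mu x)\<^sup>2 \<partial>M) + b * (\<integral>x. ((p * mu x + q * eta x) - mu x)\<^sup>2 \<partial>M)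
      + lam * a * (\<integral>x. (Y x - (p * mu x + q * eta x))\<^sup>2 \<partial>M)
      + a * (\<integral>x. (f x - mu x)\<^sup>2 \<partial>M) + b * (\<integral>x. ((g x - (p * mu x + q * eta x)) - (f x - mu x))\<^sup>2 \<partial>M)
      + lam * a * (\<integral>x. (g x - (p * mu x + q * eta x))\<^sup>2 \<partial>M)"
proof -
  define t where "t x = p * mu x + q * eta x" for x
  have pw: "\<And>x. a * (Y x - f x)\<^sup>2 + b * (g x - f x)\<^sup>2 + lam * a * (Y x - g x)\<^sup>2 =
     a * (Y x - mu x)\<^sup>2 + b * (t x - mu x)\<^sup>2 + lam * a * (Y x - t x)\<^sup>2
     + a * (f x - mu x)\<^sup>2 + b * ((g x - t x) - (f x - mu x))\<^sup>2 + lam * a * (g x - t x)\<^sup>2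
     - 2 * (a + b * q) * ((f x - mu x) * (Y x - mu x)) + 2 * (b * q) * ((f x - mu x) * (Y x - eta x))
     - 2 * (lam * a) * ((g x - t x) * (Y x - eta x))"
    by (rule pw3[OF pq bq]) (simp add: t_def)
  have sq: "\<And>u. L2fun M u \<Longrightarrow> integrable M (\<lambda>x. (u x)\<^sup>2)" unfolding L2fun_def by simp
  have Lt: "L2fun M t" unfolding t_def by (rule L2_add[OF L2_cmult[OF L(2)] L2_cmult[OF L(3)]])
  have i1: "integrable M (\<lambda>x. (Y x - f x)\<^sup>2)" by (rule sq[OF L2_diff[OF L(1) L(4)]])
  have i2: "integrable M (\<lambda>x. (g x - f x)\<^sup>2)" by (rule sq[OF L2_diff[OF L(5) L(4)]])
  have i3: "integrable M (\<lambda>x. (Y x - g x)\<^sup>2)" by (rule sq[OF L2_diff[OF L(1) L(5)]])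
  have j1: "integrable M (\<lambda>x. (Y x - mu x)\<^sup>2)" by (rule sq[OF L2_diff[OF L(1) L(2)]])
  have j2: "integrable M (\<lambda>x. (t x - mu x)\<^sup>2)" by (rule sq[OF L2_diff[OF Lt L(2)]])
  have j3: "integrable M (\<lambda>x. (Y x - t x)\<^sup>2)" by (rule sq[OF L2_diff[OF L(1) Lt]])
  have j4: "integrable M (\<lambda>x. (f x - mu x)\<^sup>2)" by (rule sq[OF L2_diff[OF L(4) L(2)]])
  have j5: "integrable M (\<lambda>x. ((g x - t x) - (f x - mu x))\<^sup>2)"
    by (rule sq[OF L2_diff[OF L2_diff[OF L(5) Lt] L2_diff[OF L(4) L(2)]]])
  have j6: "integrable M (\<lambda>x. (g x - t x)\<^sup>2)" by (rule sq[OF L2_diff[OF L(5) Lt]])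
  have k1: "integrable M (\<lambda>x. (f x - mu x) * (Y x - mu x))"
    by (rule L2_mult[OF L2_diff[OF L(4) L(2)] L2_diff[OF L(1) L(2)]])
  have k2: "integrable M (\<lambda>x. (f x - mu x) * (Y x - eta x))"
    by (rule L2_mult[OF L2_diff[OF L(4) L(2)] L2_diff[OF L(1) L(3)]])
  have k3: "integrable M (\<lambda>x. (g x - t x) * (Y x - eta x))"
    by (rule L2_mult[OF L2_diff[OF L(5) Lt] L2_diff[OF L(1) L(3)]])
  have "a * (\<integral>x. (Y x - f x)\<^sup>2 \<partial>M) + b * (\<integral>x. (g x - f x)\<^sup>2 \<partial>M) + lam * a * (\<integral>x. (Y x - g x)\<^sup>2 \<partial>M)
     = (\<integral>x. a * (Y x - f x)\<^sup>2 + b * (g x - f x)\<^sup>2 + lam * a * (Y x - g x)\<^sup>2 \<partial>M)"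
    using i1 i2 i3 by simp
  also have "\<dots> = (\<integral>x. a * (Y x - mu x)\<^sup>2 + b * (t x - mu x)\<^sup>2 + lam * a * (Y x - t x)\<^sup>2
     + a * (f x - mu x)\<^sup>2 + b * ((g x - t x) - (f x - mu x))\<^sup>2 + lam * a * (g x - t x)\<^sup>2
     - 2 * (a + b * q) * ((f x - mu x) * (Y x - mu x)) + 2 * (b * q) * ((f x - mu x) * (Y x - eta x))
     - 2 * (lam * a) * ((g x - t x) * (Y x - eta x)) \<partial>M)"
    unfolding pw ..
  also have "\<dots> = a * (\<integral>x. (Y x - mu x)\<^sup>2 \<partial>M) + b * (\<integral>x. (t x - mu x)\<^sup>2 \<partial>M) + lam * a * (\<integral>x. (Y x - t x)\<^sup>2 \<partial>M)
     + a * (\<integral>x. (f x - mu x)\<^sup>2 \<partial>M) + b * (\<integral>x. ((g x - t x) - (f x - mu x))\<^sup>2 \<partial>M) + lam * a * (\<integral>x. (g x - t x)\<^sup>2 \<partial>M)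
     - 2 * (a + b * q) * (\<integral>x. (f x - mu x) * (Y x - mu x) \<partial>M) + 2 * (b * q) * (\<integral>x. (f x - mu x) * (Y x - eta x) \<partial>M)
     - 2 * (lam * a) * (\<integral>x. (g x - t x) * (Y x - eta x) \<partial>M)"
    using j1 j2 j3 j4 j5 j6 k1 k2 k3 by simp
  finally show ?thesis using o1 o2 o3 unfolding t_def by simp
qed

theorem theorem2p1:
  fixes M :: "'m measure" and MX :: "'x measure" and MW :: "'w measure"
    and X :: "'m \<Rightarrow> 'x" and W :: "'m \<Rightarrow> 'w" and Y :: "'m \<Rightarrow> real"
    and n m :: nat and lam :: real
    and F :: "('x \<Rightarrow> real) set" and G :: "('x \<times> 'w \<Rightarrow> real) set"
    and \<mu> :: "'x \<Rightarrow> real" and \<eta> :: "'x \<times> 'w \<Rightarrow> real"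
    and fs :: "'x \<Rightarrow> real" and gs :: "'x \<times> 'w \<Rightarrow> real"
  assumes prob: "prob_space M"
    and Xmeas: "X \<in> measurable M MX" and Wmeas: "W \<in> measurable M MW"
    and Ymeas: "Y \<in> borel_measurable M" and Y2: "integrable M (\<lambda>\<omega>. (Y \<omega>)\<^sup>2)"
    and n1: "n \<ge> 1" and m1: "m \<ge> 1" and lam0: "lam \<ge> 0"
    and Fcc: "L2ccset (distr M MX X) F"
    and Gcc: "L2ccset (distr M (MX \<Otimes>\<^sub>M MW) (\<lambda>\<omega>. (X \<omega>, W \<omega>))) G"
    and \<mu>_def: "cond_exp_version M MX X Y \<mu>"
    and \<eta>_def: "cond_exp_version M (MX \<Otimes>\<^sub>M MW) (\<lambda>\<omega>. (X \<omega>, W \<omega>)) Y \<eta>"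
    and fsF: "fs \<in> F" and gsG: "gs \<in> G"
    and minim: "\<forall>f\<in>F. \<forall>g\<in>G. popLoss M X W Y n m lam fs gs \<le> popLoss M X W Y n m lam f g"
  shows "(\<forall>k. cond_exp_version M MX X (\<lambda>\<omega>. gs (X \<omega>, W \<omega>)) k \<longrightarrow>
            is_proj M X F (\<lambda>x. real n / real (n + m) * \<mu> x + real m / real (n + m) * k x) fs)
       \<and> is_proj M (\<lambda>\<omega>. (X \<omega>, W \<omega>)) G
            (\<lambda>z. real m / (real m + real n * lam) * fs (fst z)
               + real n * lam / (real m + real n * lam) * \<eta> z) gs
       \<and> (\<mu> \<in> F \<and> (\<lambda>z. \<mu> (fst z)) \<in> G \<and> \<eta> \<in> G \<longrightarrow>
            (AE x in distr M MX X. fs x = \<mu> x)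
          \<and> (AE z in distr M (MX \<Otimes>\<^sub>M MW) (\<lambda>\<omega>. (X \<omega>, W \<omega>)).
                gs z = real m / (real m + real n * lam) * \<mu> (fst z)
                     + real n * lam / (real m + real n * lam) * \<eta> z))"
proof -
  interpret P: prob_space M by (rule prob)
  have Zmeas: "(\<lambda>\<omega>. (X \<omega>, W \<omega>)) \<in> measurable M (MX \<Otimes>\<^sub>M MW)"
    using Xmeas Wmeas by (rule measurable_Pair)
  have fin: "finite_measure M" by (rule P.finite_measure_axioms)
  define a where "a = real n / real (n + m)"
  define b where "b = real m / real (n + m)"
  have nm: "real (n + m) > 0" using n1 by simp
  have ab: "a + b = 1"
  proof -
    have "a + b = (real n + real m) / real (n + m)" unfolding a_def b_def by (simp only: add_divide_distrib)
    also have "\<dots> = 1" using nm by simp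
    finally show ?thesis .
  qed
  have a0: "a > 0" unfolding a_def using n1 nm by simp
  have b0: "b > 0" unfolding b_def using m1 nm by simp
  have pl: "\<And>f g. popLoss M X W Y n m lam f g =
      a * (\<integral>\<omega>. (Y \<omega> - f (X \<omega>))\<^sup>2 \<partial>M) + b * (\<integral>\<omega>. (g (X \<omega>, W \<omega>) - f (X \<omega>))\<^sup>2 \<partial>M)
      + lam * a * (\<integral>\<omega>. (Y \<omega> - g (X \<omega>, W \<omega>))\<^sup>2 \<partial>M)"
    unfolding popLoss_def a_def b_def by (rule refl)
  have LY: "L2fun M Y" unfolding L2fun_def using Ymeas Y2 by simp
  have Lmu: "L2fun M (\<lambda>\<omega>. \<mu> (X \<omega>))" by (rule CE(1)[OF prob Xmeas Ymeas Y2 \<mu>_def])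
  have Leta: "L2fun M (\<lambda>\<omega>. \<eta> (X \<omega>, W \<omega>))" by (rule CE(1)[OF prob Zmeas Ymeas Y2 \<eta>_def])
  have oX: "\<And>\<phi>. \<phi> \<in> borel_measurable MX \<Longrightarrow> L2fun M (\<lambda>\<omega>. \<phi> (X \<omega>)) \<Longrightarrow>
      (\<integral>\<omega>. \<phi> (X \<omega>) * (Y \<omega> - \<mu> (X \<omega>)) \<partial>M) = 0"
    using CE(2)[OF prob Xmeas Ymeas Y2 \<mu>_def] unfolding L2fun_def by blast
  have oZ: "\<And>\<phi>. \<phi> \<in> borel_measurable (MX \<Otimes>\<^sub>M MW) \<Longrightarrow> L2fun M (\<lambda>\<omega>. \<phi> (X \<omega>, W \<omega>)) \<Longrightarrow>
      (\<integral>\<omega>. \<phi> (X \<omega>, W \<omega>) * (Y \<omega> - \<eta> (X \<omega>, W \<omega>)) \<partial>M) = 0"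
    using CE(2)[OF prob Zmeas Ymeas Y2 \<eta>_def] unfolding L2fun_def by blast
  have FL: "\<And>f. f \<in> F \<Longrightarrow> L2fun M (\<lambda>\<omega>. f (X \<omega>)) \<and> f \<in> borel_measurable MX"
    using Fcc L2_distr[OF Xmeas] unfolding L2ccset_def by (auto simp: L2fun_def)
  have GL: "\<And>g. g \<in> G \<Longrightarrow> L2fun M (\<lambda>\<omega>. g (X \<omega>, W \<omega>)) \<and> g \<in> borel_measurable (MX \<Otimes>\<^sub>M MW)"
    using Gcc L2_distr[OF Zmeas] unfolding L2ccset_def by (auto simp: L2fun_def)
  have Lfs: "L2fun M (\<lambda>\<omega>. fs (X \<omega>))" and fsm: "fs \<in> borel_measurable MX" using FL[OF fsF] by auto
  have Lgs: "L2fun M (\<lambda>\<omega>. gs (X \<omega>, W \<omega>))" and gsm: "gs \<in> borel_measurable (MX \<Otimes>\<^sub>M MW)"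
    using GL[OF gsG] by auto
  have sqcomm: "\<And>g f :: 'm \<Rightarrow> real. (\<integral>\<omega>. (g \<omega> - f \<omega>)\<^sup>2 \<partial>M) = (\<integral>\<omega>. (f \<omega> - g \<omega>)\<^sup>2 \<partial>M)"
    by (rule Bochner_Integration.integral_cong[OF refl]) (rule power2_commute)
  have part1: "\<forall>k. cond_exp_version M MX X (\<lambda>\<omega>. gs (X \<omega>, W \<omega>)) k \<longrightarrow>
            is_proj M X F (\<lambda>x. real n / real (n + m) * \<mu> x + real m / real (n + m) * k x) fs"
  proof (intro allI impI)
    fix k assume hk: "cond_exp_version M MX X (\<lambda>\<omega>. gs (X \<omega>, W \<omega>)) k"
    have gsM: "(\<lambda>\<omega>. gs (X \<omega>, W \<omega>)) \<in> borel_measurable M" and gs2: "integrable M (\<lambda>\<omega>. (gs (X \<omega>, W \<omega>))\<^sup>2)"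
      using Lgs unfolding L2fun_def by auto
    have Lk: "L2fun M (\<lambda>\<omega>. k (X \<omega>))" by (rule CE(1)[OF prob Xmeas gsM gs2 hk])
    have ok: "\<And>\<phi>. \<phi> \<in> borel_measurable MX \<Longrightarrow> L2fun M (\<lambda>\<omega>. \<phi> (X \<omega>)) \<Longrightarrow>
      (\<integral>\<omega>. \<phi> (X \<omega>) * (gs (X \<omega>, W \<omega>) - k (X \<omega>)) \<partial>M) = 0"
      using CE(2)[OF prob Xmeas gsM gs2 hk] unfolding L2fun_def by blast
    have id: "\<And>f. f \<in> F \<Longrightarrow> a * (\<integral>\<omega>. (Y \<omega> - f (X \<omega>))\<^sup>2 \<partial>M) + b * (\<integral>\<omega>. (gs (X \<omega>, W \<omega>) - f (X \<omega>))\<^sup>2 \<partial>M) =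
      (\<integral>\<omega>. (a * \<mu> (X \<omega>) + b * k (X \<omega>) - f (X \<omega>))\<^sup>2 \<partial>M) +
      (\<integral>\<omega>. a * (Y \<omega>)\<^sup>2 + b * (gs (X \<omega>, W \<omega>))\<^sup>2 - (a * \<mu> (X \<omega>) + b * k (X \<omega>))\<^sup>2 \<partial>M)"
    proof -
      fix f assume "f \<in> F"
      then have Lf: "L2fun M (\<lambda>\<omega>. f (X \<omega>))" and fm: "f \<in> borel_measurable MX" using FL by auto
      show "?thesis f"
        by (rule ident2[OF ab LY Lgs Lmu Lk Lf oX[OF fm Lf] ok[OF fm Lf]])
    qed
    show "is_proj M X F (\<lambda>x. real n / real (n + m) * \<mu> x + real m / real (n + m) * k x) fs"
      unfolding is_proj_def a_def[symmetric] b_def[symmetric]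
    proof (intro conjI ballI)
      show "fs \<in> F" by (rule fsF)
      fix c assume cF: "c \<in> F"
      have "popLoss M X W Y n m lam fs gs \<le> popLoss M X W Y n m lam c gs" using minim cF gsG by blast
      then have "a * (\<integral>\<omega>. (Y \<omega> - fs (X \<omega>))\<^sup>2 \<partial>M) + b * (\<integral>\<omega>. (gs (X \<omega>, W \<omega>) - fs (X \<omega>))\<^sup>2 \<partial>M)
         \<le> a * (\<integral>\<omega>. (Y \<omega> - c (X \<omega>))\<^sup>2 \<partial>M) + b * (\<integral>\<omega>. (gs (X \<omega>, W \<omega>) - c (X \<omega>))\<^sup>2 \<partial>M)"
        unfolding pl by linarith
      then show "(\<integral>\<omega>. (a * \<mu> (X \<omega>) + b * k (X \<omega>) - fs (X \<omega>))\<^sup>2 \<partial>M)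
          \<le> (\<integral>\<omega>. (a * \<mu> (X \<omega>) + b * k (X \<omega>) - c (X \<omega>))\<^sup>2 \<partial>M)"
        unfolding id[OF fsF] id[OF cF] by linarith
    qed
  qed
  define p where "p = real m / (real m + real n * lam)"
  define q where "q = real n * lam / (real m + real n * lam)"
  have mnl: "real m + real n * lam > 0" using m1 lam0 by (simp add: add_pos_nonneg)
  have pq: "p + q = 1"
  proof -
    have "p + q = (real m + real n * lam) / (real m + real n * lam)" unfolding p_def q_def by (simp only: add_divide_distrib)
    also have "\<dots> = 1" using mnl by simp
    finally show ?thesis .
  qed
  have p0: "0 \<le> p" "p \<le> 1" unfolding p_def using mnl lam0 by auto
  define c where "c = (real m + real n * lam) / real (n + m)"
  have c0: "c > 0" unfolding c_def using mnl nm by simp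
  have frac1: "\<And>D E x :: real. D \<noteq> 0 \<Longrightarrow> x / E = (D / E) * (x / D)" by simp
  have bc: "b = c * p" unfolding b_def c_def p_def by (rule frac1) (use mnl in simp)
  have lc: "lam * a = c * q"
  proof -
    have "lam * a = real n * lam / real (n + m)" unfolding a_def by simp
    also have "\<dots> = c * q" unfolding c_def q_def by (rule frac1) (use mnl in simp)
    finally show ?thesis .
  qed
  have part2: "is_proj M (\<lambda>\<omega>. (X \<omega>, W \<omega>)) G
            (\<lambda>z. real m / (real m + real n * lam) * fs (fst z)
               + real n * lam / (real m + real n * lam) * \<eta> z) gs"
    unfolding is_proj_def p_def[symmetric] q_def[symmetric]
  proof (intro conjI ballI)
    show "gs \<in> G" by (rule gsG)
    have id: "\<And>g. g \<in> G \<Longrightarrow> p * (\<integral>\<omega>. (fs (X \<omega>) - g (X \<omega>, W \<omega>))\<^sup>2 \<partial>M) + q * (\<integral>\<omega>. (Y \<omega> - g (X \<omega>, W \<omega>))\<^sup>2 \<partial>M) =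
      (\<integral>\<omega>. (p * fs (X \<omega>) + q * \<eta> (X \<omega>, W \<omega>) - g (X \<omega>, W \<omega>))\<^sup>2 \<partial>M) +
      (\<integral>\<omega>. p * (fs (X \<omega>))\<^sup>2 + q * (Y \<omega>)\<^sup>2 - (p * fs (X \<omega>) + q * \<eta> (X \<omega>, W \<omega>))\<^sup>2 \<partial>M)"
    proof -
      fix g assume "g \<in> G"
      then have Lg: "L2fun M (\<lambda>\<omega>. g (X \<omega>, W \<omega>))" and gm: "g \<in> borel_measurable (MX \<Otimes>\<^sub>M MW)" using GL by auto
      show "?thesis g"
        by (rule ident2[OF pq Lfs LY Lfs Leta Lg _ oZ[OF gm Lg]]) simp
    qed
    fix g assume gG: "g \<in> G"
    have "popLoss M X W Y n m lam fs gs \<le> popLoss M X W Y n m lam fs g" using minim gG fsF by blast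
    then have "c * (p * (\<integral>\<omega>. (fs (X \<omega>) - gs (X \<omega>, W \<omega>))\<^sup>2 \<partial>M) + q * (\<integral>\<omega>. (Y \<omega> - gs (X \<omega>, W \<omega>))\<^sup>2 \<partial>M))
      \<le> c * (p * (\<integral>\<omega>. (fs (X \<omega>) - g (X \<omega>, W \<omega>))\<^sup>2 \<partial>M) + q * (\<integral>\<omega>. (Y \<omega> - g (X \<omega>, W \<omega>))\<^sup>2 \<partial>M))"
      unfolding pl lc bc sqcomm[of "\<lambda>\<omega>. gs (X \<omega>, W \<omega>)"] sqcomm[of "\<lambda>\<omega>. g (X \<omega>, W \<omega>)"]
      by (simp add: algebra_simps)
    then have "p * (\<integral>\<omega>. (fs (X \<omega>) - gs (X \<omega>, W \<omega>))\<^sup>2 \<partial>M) + q * (\<integral>\<omega>. (Y \<omega> - gs (X \<omega>, W \<omega>))\<^sup>2 \<partial>M)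
      \<le> p * (\<integral>\<omega>. (fs (X \<omega>) - g (X \<omega>, W \<omega>))\<^sup>2 \<partial>M) + q * (\<integral>\<omega>. (Y \<omega> - g (X \<omega>, W \<omega>))\<^sup>2 \<partial>M)"
      using c0 by simp
    then show "(\<integral>\<omega>. ((\<lambda>z. p * fs (fst z) + q * \<eta> z) (X \<omega>, W \<omega>) - gs (X \<omega>, W \<omega>))\<^sup>2 \<partial>M)
       \<le> (\<integral>\<omega>. ((\<lambda>z. p * fs (fst z) + q * \<eta> z) (X \<omega>, W \<omega>) - g (X \<omega>, W \<omega>))\<^sup>2 \<partial>M)"
      unfolding id[OF gsG] id[OF gG] by simp
  qed
  have part3: "\<mu> \<in> F \<and> (\<lambda>z. \<mu> (fst z)) \<in> G \<and> \<eta> \<in> G \<longrightarrow>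
            (AE x in distr M MX X. fs x = \<mu> x)
          \<and> (AE z in distr M (MX \<Otimes>\<^sub>M MW) (\<lambda>\<omega>. (X \<omega>, W \<omega>)).
                gs z = real m / (real m + real n * lam) * \<mu> (fst z)
                     + real n * lam / (real m + real n * lam) * \<eta> z)"
    unfolding p_def[symmetric] q_def[symmetric]
  proof (intro impI)
    assume H: "\<mu> \<in> F \<and> (\<lambda>z. \<mu> (fst z)) \<in> G \<and> \<eta> \<in> G"
    have \<mu>m: "\<mu> \<in> borel_measurable MX" using FL H by auto
    have \<eta>m: "\<eta> \<in> borel_measurable (MX \<Otimes>\<^sub>M MW)" using GL H by auto
    define t where "t = (\<lambda>z. p * \<mu> (fst z) + q * \<eta> z)"
    have tG: "t \<in> G"
    proof -
      have "L2convex (distr M (MX \<Otimes>\<^sub>M MW) (\<lambda>\<omega>. (X \<omega>, W \<omega>))) G" using Gcc unfolding L2ccset_def by auto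
      then have cv: "\<forall>f\<in>G. \<forall>g\<in>G. \<forall>t::real. 0 \<le> t \<and> t \<le> 1 \<longrightarrow> (\<lambda>x. t * f x + (1 - t) * g x) \<in> G"
        unfolding L2convex_def by blast
      have "(\<lambda>x. p * \<mu> (fst x) + (1 - p) * \<eta> x) \<in> G"
        using cv[rule_format, of "\<lambda>z. \<mu> (fst z)" \<eta> p] H p0 by simp
      moreover have "1 - p = q" using pq by simp
      ultimately show ?thesis unfolding t_def by simp
    qed
    have "popLoss M X W Y n m lam fs gs \<le> popLoss M X W Y n m lam \<mu> t" using minim H tG by blast
    note ineq = this[unfolded pl t_def fst_conv]
    have bq: "b * q = lam * a * p" using bc lc by simp
    have Lf\<mu>: "L2fun M (\<lambda>\<omega>. fs (X \<omega>) - \<mu> (X \<omega>))" by (rule L2_diff[OF Lfs Lmu])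
    have o1: "(\<integral>\<omega>. (fs (X \<omega>) - \<mu> (X \<omega>)) * (Y \<omega> - \<mu> (X \<omega>)) \<partial>M) = 0"
      using oX[of "\<lambda>x. fs x - \<mu> x"] Lf\<mu> fsm \<mu>m by simp
    have o2: "(\<integral>\<omega>. (fs (X \<omega>) - \<mu> (X \<omega>)) * (Y \<omega> - \<eta> (X \<omega>, W \<omega>)) \<partial>M) = 0"
    proof -
      have "(\<lambda>z. fs (fst z) - \<mu> (fst z)) \<in> borel_measurable (MX \<Otimes>\<^sub>M MW)"
        using fsm \<mu>m by measurable
      then show ?thesis using oZ[of "\<lambda>z. fs (fst z) - \<mu> (fst z)"] Lf\<mu> by simp
    qed
    have Lt: "L2fun M (\<lambda>\<omega>. p * \<mu> (X \<omega>) + q * \<eta> (X \<omega>, W \<omega>))"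
      by (rule L2_add[OF L2_cmult[OF Lmu] L2_cmult[OF Leta]])
    have o3: "(\<integral>\<omega>. (gs (X \<omega>, W \<omega>) - (p * \<mu> (X \<omega>) + q * \<eta> (X \<omega>, W \<omega>))) * (Y \<omega> - \<eta> (X \<omega>, W \<omega>)) \<partial>M) = 0"
    proof -
      have "(\<lambda>z. gs z - (p * \<mu> (fst z) + q * \<eta> z)) \<in> borel_measurable (MX \<Otimes>\<^sub>M MW)"
        using gsm \<mu>m \<eta>m by measurable
      then show ?thesis using oZ[of "\<lambda>z. gs z - (p * \<mu> (fst z) + q * \<eta> z)"] L2_diff[OF Lgs Lt] by simp
    qed
    note id3 = ident3[OF pq bq LY Lmu Leta Lfs Lgs o1 o2 o3]
    define I1 where "I1 = (\<integral>\<omega>. (fs (X \<omega>) - \<mu> (X \<omega>))\<^sup>2 \<partial>M)"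
    define I2 where "I2 = (\<integral>\<omega>. ((gs (X \<omega>, W \<omega>) - (p * \<mu> (X \<omega>) + q * \<eta> (X \<omega>, W \<omega>))) - (fs (X \<omega>) - \<mu> (X \<omega>)))\<^sup>2 \<partial>M)"
    define I3 where "I3 = (\<integral>\<omega>. (gs (X \<omega>, W \<omega>) - (p * \<mu> (X \<omega>) + q * \<eta> (X \<omega>, W \<omega>)))\<^sup>2 \<partial>M)"
    have I1n: "I1 \<ge> 0" "I2 \<ge> 0" "I3 \<ge> 0" unfolding I1_def I2_def I3_def by simp_all
    have "a * I1 + b * I2 + lam * a * I3 \<le> 0"
      using ineq id3 unfolding I1_def I2_def I3_def by linarith
    moreover have "lam * a * I3 \<ge> 0" using lam0 a0 I1n by simp
    moreover have "a * I1 \<ge> 0" "b * I2 \<ge> 0" using a0 b0 I1n by simp_all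
    ultimately have "a * I1 = 0" "b * I2 = 0" by linarith+
    then have z1: "I1 = 0" and z2: "I2 = 0" using a0 b0 by simp_all
    have sq: "\<And>u. L2fun M u \<Longrightarrow> integrable M (\<lambda>x. (u x)\<^sup>2)" unfolding L2fun_def by simp
    have "AE \<omega> in M. (fs (X \<omega>) - \<mu> (X \<omega>))\<^sup>2 = 0"
      using z1 integral_nonneg_eq_0_iff_AE[OF sq[OF Lf\<mu>]] unfolding I1_def by simp
    then have AE1: "AE \<omega> in M. fs (X \<omega>) = \<mu> (X \<omega>)" by simp
    have "AE \<omega> in M. ((gs (X \<omega>, W \<omega>) - (p * \<mu> (X \<omega>) + q * \<eta> (X \<omega>, W \<omega>))) - (fs (X \<omega>) - \<mu> (X \<omega>)))\<^sup>2 = 0"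
      using z2 integral_nonneg_eq_0_iff_AE[OF sq[OF L2_diff[OF L2_diff[OF Lgs Lt] Lf\<mu>]]] unfolding I2_def by simp
    then have AE2: "AE \<omega> in M. gs (X \<omega>, W \<omega>) = p * \<mu> (fst (X \<omega>, W \<omega>)) + q * \<eta> (X \<omega>, W \<omega>)"
      using AE1 by eventually_elim simp
    have s1: "{x \<in> space MX. fs x = \<mu> x} \<in> sets MX" using fsm \<mu>m by measurable
    have s2: "{z \<in> space (MX \<Otimes>\<^sub>M MW). gs z = p * \<mu> (fst z) + q * \<eta> z} \<in> sets (MX \<Otimes>\<^sub>M MW)"
      using gsm \<mu>m \<eta>m by measurable
    show "(AE x in distr M MX X. fs x = \<mu> x) \<and>
      (AE z in distr M (MX \<Otimes>\<^sub>M MW) (\<lambda>\<omega>. (X \<omega>, W \<omega>)). gs z = p * \<mu> (fst z) + q * \<eta> z)"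
      using AE_distr_iff[OF Xmeas s1] AE_distr_iff[OF Zmeas s2] AE1 AE2 by simp
  qed
  show ?thesis using part1 part2 part3 by blast
qed

end
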